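(* Let $(U_1,U_2)$ have joint CDF equal to the power-divergence copula $C_\lambda$, and define the tail-dependence coefficients $T_L(\lambda)=\lim_{u\downarrow0}\Pr(U_1\le u\mid U_2\le u)$ and $T_U(\lambda)=\lim_{u\uparrow1}\Pr(U_1\ge u\mid U_2\ge u)$. Then (i) $T_L(\lambda)=2^{1/(\lambda+1)}$ if $\lambda<-1$ and $T_L(\lambda)=0$ if $\lambda\ge-1$; (ii) $T_U(\lambda)=2-\sqrt{2}$ for every $\lambda\in(-\infty,\infty)$.
   Context: For $\lambda\in\mathbb{R}$ define $\phi_\lambda$ on $[0,\infty)$ by $\phi_\lambda(x)=\frac{1}{\lambda(\lambda+1)}(x^{\lambda+1}-x+\lambda(1-x))$ for $\lambda\neq-1,0$; $\phi_0(x)=1-x+x\log x$; $\phi_{-1}(x)=x-1-\log x$; values at $x=0$ are limits, so $\phi_\lambda(0)=1/(\lambda+1)$ for $\lambda>-1$ and $\phi_\lambda(0)=\infty$ for $\lambda\le-1$. On $[0,1]$, $\phi_\lambda$ is convex, strictly decreasing, $\phi_\lambda(1)=0$. The pseudoinverse is $\phi_\lambda^{[-1]}(t)=\phi_\lambda^{-1}(t)$ (inverse of $\phi_\lambda|_{[0,1]}$) for $0\le t<\phi_\lambda(0)$ and $0$ for $t\ge\phi_\lambda(0)$. The power-divergence (PD) copula is $C_\lambda(u_1,u_2)=\phi_\lambda^{[-1]}(\phi_\lambda(u_1)+\phi_\lambda(u_2))$, $u_1,u_2\in[0,1]$ (with $\phi_\lambda^{[-1]}(\infty)=0$). *)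

theory Defs
  imports "HOL-Probability.Probability"
begin

text \<open>The power-divergence generator, real formula for x > 0 (and for x = 0 whenever
  the limit is finite, i.e. lam > -1, where the formula with 0 powr a = 0, 0 * ln 0 = 0
  gives the limit value 1/(lam+1)).\<close>
definition pd_phi_real :: "real \<Rightarrow> real \<Rightarrow> real" where
  "pd_phi_real lam x =
     (if lam = 0 then 1 - x + x * ln x
      else if lam = -1 then x - 1 - ln x
      else (x powr (lam + 1) - x + lam * (1 - x)) / (lam * (lam + 1)))"

definition pd_phi :: "real \<Rightarrow> real \<Rightarrow> ereal" where
  "pd_phi lam x = (if x = 0 \<and> lam \<le> -1 then \<infinity> else ereal (pd_phi_real lam x))"

definition pd_phi_pinv :: "real \<Rightarrow> ereal \<Rightarrow> real" where
  "pd_phi_pinv lam t =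
     (if t < pd_phi lam 0 then (THE x. x \<in> {0..1} \<and> pd_phi lam x = t) else 0)"

definition pd_copula :: "real \<Rightarrow> real \<Rightarrow> real \<Rightarrow> real" where
  "pd_copula lam u1 u2 = pd_phi_pinv lam (pd_phi lam u1 + pd_phi lam u2)"

end

theory Submission
  imports Defs "HOL-Real_Asymp.Real_Asymp"
begin

definition dphi :: "real \<Rightarrow> real \<Rightarrow> real" where
  "dphi lam x = (if lam = 0 then ln x else (x powr lam - 1) / lam)"

lemma aux_id: assumes "lam \<noteq> 0" "lam \<noteq> -1"
  shows "((lam+1) * p - 1 + lam * (0 - 1)) / (lam * (lam + 1)) = (p - 1) / (lam::real)"
proof -
  have "lam + 1 \<noteq> 0" using assms by linarith
  have "(lam+1) * p - 1 + lam * (0 - 1) = (lam + 1) * (p - 1)" by (simp add: algebra_simps)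
  then show ?thesis using \<open>lam + 1 \<noteq> 0\<close> by simp
qed

lemma phi_deriv:
  assumes "x > 0"
  shows "(pd_phi_real lam has_real_derivative dphi lam x) (at x)"
proof -
  consider "lam = 0" | "lam = -1" | "lam \<noteq> 0" "lam \<noteq> -1" by blast
  then show ?thesis
  proof cases
    case 1
    have "((\<lambda>x. 1 - x + x * ln x) has_real_derivative (0 - 1 + (1 * ln x + x * (1/x)))) (at x)"
      using assms by (intro derivative_eq_intros) auto
    then show ?thesis using 1 assms unfolding pd_phi_real_def[abs_def] dphi_def by simp
  next
    case 2
    have "((\<lambda>x. x - 1 - ln x) has_real_derivative (1 - 0 - 1/x)) (at x)"
      using assms by (intro derivative_eq_intros) auto
    moreover have "dphi lam x = 1 - 1/x" using assms 2 by (simp add: dphi_def powr_minus divide_simps)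
    moreover have "pd_phi_real lam = (\<lambda>x. x - 1 - ln x)" using 2 by (simp add: pd_phi_real_def[abs_def])
    ultimately show ?thesis by simp
  next
    case 3
    have "((\<lambda>x. (x powr (lam + 1) - x + lam * (1 - x)) / (lam * (lam + 1))) has_real_derivative
        (((lam+1) * x powr lam - 1 + lam * (0 - 1)) / (lam * (lam + 1)))) (at x)"
      using assms 3 by (intro derivative_eq_intros) (auto simp: powr_diff)
    moreover have "((lam+1) * x powr lam - 1 + lam * (0 - 1)) / (lam * (lam + 1)) = (x powr lam - 1) / lam"
      using 3 aux_id[of lam "x powr lam"] by simp
    ultimately show ?thesis using 3 assms unfolding pd_phi_real_def[abs_def] dphi_def by simp
  qed
qed

lemma dphi_deriv:
  assumes "x > 0"
  shows "(dphi lam has_real_derivative x powr (lam - 1)) (at x)"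
proof (cases "lam = 0")
  case True
  have "(ln has_real_derivative 1/x) (at x)" using assms by (intro derivative_eq_intros) auto
  moreover have "x powr (lam - 1) = 1/x" using True assms by (simp add: powr_minus divide_simps del: powr_neg_one)
  moreover have "dphi lam = ln" using True by (simp add: dphi_def[abs_def])
  ultimately show ?thesis by (simp only:)
next
  case False
  have "((\<lambda>x. (x powr lam - 1) / lam) has_real_derivative ((lam * x powr (lam - 1) - 0) / lam)) (at x)"
      using assms False by (intro derivative_eq_intros) auto
  then show ?thesis using False assms unfolding dphi_def[abs_def] by simp
qed

lemma phi_one [simp]: "pd_phi_real lam 1 = 0"
  by (simp add: pd_phi_real_def)

lemma dphi_one [simp]: "dphi lam 1 = 0"
  by (simp add: dphi_def)

lemma dphi_neg: assumes "0 < x" "x < 1" shows "dphi lam x < 0"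
proof -
  consider "lam = 0" | "lam > 0" | "lam < 0" by linarith
  then show ?thesis
  proof cases
    case 1 then show ?thesis using assms by (simp add: dphi_def)
  next
    case 2
    have "x powr lam < 1" using assms 2 powr_less_mono2[of lam x 1] by simp
    then show ?thesis using 2 by (simp add: dphi_def divide_neg_pos)
  next
    case 3
    have "x powr lam > 1" using assms 3 powr_less_mono2_neg[of lam x 1] by simp
    then show ?thesis using 3 by (simp add: dphi_def divide_pos_neg)
  qed
qed

lemma phi_isCont: "x > 0 \<Longrightarrow> isCont (pd_phi_real lam) x"
  using phi_deriv DERIV_isCont by blast

lemma phi_contOn: "0 < a \<Longrightarrow> continuous_on {a..b} (pd_phi_real lam)"
  by (intro continuous_at_imp_continuous_on ballI phi_isCont) auto

lemma phi_strict_dec: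
  assumes "0 < x" "x < y" "y \<le> 1"
  shows "pd_phi_real lam y < pd_phi_real lam x"
proof (rule DERIV_neg_imp_decreasing_open[OF assms(2)])
  fix t assume "x < t" "t < y"
  then show "\<exists>d. (pd_phi_real lam has_real_derivative d) (at t) \<and> d < 0"
    using assms phi_deriv dphi_neg by (metis less_le_trans order_less_le_trans less_trans)
qed (use phi_contOn assms in auto)

lemma phi_dec:
  assumes "0 < x" "x \<le> y" "y \<le> 1"
  shows "pd_phi_real lam y \<le> pd_phi_real lam x"
  using phi_strict_dec[of x y lam] assms by (cases "x = y") auto

lemma phi_nonneg: "0 < x \<Longrightarrow> x \<le> 1 \<Longrightarrow> 0 \<le> pd_phi_real lam x"
  using phi_dec[of x 1 lam] by simp

lemma phi_pos: "0 < x \<Longrightarrow> x < 1 \<Longrightarrow> 0 < pd_phi_real lam x"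
  using phi_strict_dec[of x 1 lam] by simp

lemma phi_taylor:
  assumes "0 < x" "x < 1"
  shows "\<exists>t. x < t \<and> t < 1 \<and> pd_phi_real lam x = t powr (lam - 1) * (1 - x)^2 / 2"
proof -
  define diff where "diff = (\<lambda>m::nat. if m = 0 then pd_phi_real lam else if m = 1 then dphi lam
     else (\<lambda>t. t powr (lam - 1)))"
  have "\<exists>t. x < t \<and> t < 1 \<and>
    pd_phi_real lam x = (\<Sum>m<2. (diff m 1 / fact m) * (x - 1)^m) + (diff 2 t / fact 2) * (x - 1)^2"
  proof (rule Taylor_down)
    show "diff 0 = pd_phi_real lam" by (simp add: diff_def)
    show "\<forall>m t. m < 2 \<and> x \<le> t \<and> t \<le> 1 \<longrightarrow> (diff m has_real_derivative diff (Suc m) t) (at t)"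
    proof (intro allI impI)
      fix m :: nat and t :: real assume h: "m < 2 \<and> x \<le> t \<and> t \<le> 1"
      then have "m = 0 \<or> m = 1" by auto
      moreover have "t > 0" using h assms by auto
      ultimately show "(diff m has_real_derivative diff (Suc m) t) (at t)"
        using phi_deriv dphi_deriv by (auto simp: diff_def)
    qed
  qed (use assms in auto)
  then obtain t where "x < t" "t < 1"
    "pd_phi_real lam x = (\<Sum>m<2. (diff m 1 / fact m) * (x - 1)^m) + (diff 2 t / fact 2) * (x - 1)^2"
    by blast
  moreover have "(\<Sum>m<2. (diff m 1 / fact m) * (x - 1)^m) = 0"
    by (simp add: diff_def numeral_2_eq_2)
  moreover have "(x - 1)^2 = (1 - x)^2" by (simp add: power2_commute)
  ultimately show ?thesis by (auto simp: diff_def)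
qed

lemma pd_phi_pos [simp]: "x > 0 \<Longrightarrow> pd_phi lam x = ereal (pd_phi_real lam x)"
  by (simp add: pd_phi_def)

lemma pd_phi_zero_le: "lam \<le> -1 \<Longrightarrow> pd_phi lam 0 = \<infinity>"
  by (simp add: pd_phi_def)

lemma phi_at0: assumes "lam > -1" shows "pd_phi_real lam 0 = 1 / (lam + 1)"
proof (cases "lam = 0")
  case False
  then have "lam / (lam * (lam + 1)) = 1 / (lam + 1)" by simp
  then show ?thesis using False assms by (simp add: pd_phi_real_def)
qed (simp add: pd_phi_real_def)

lemma pd_phi_zero_gt: "lam > -1 \<Longrightarrow> pd_phi lam 0 = ereal (1 / (lam + 1))"
  by (simp add: pd_phi_def phi_at0)

lemma phi_lt_phi0:
  assumes "lam > -1" "0 < x" "x \<le> 1"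
  shows "pd_phi_real lam x < 1 / (lam + 1)"
proof -
  consider "lam = 0" | "lam > 0" | "lam < 0" by linarith
  then show ?thesis
  proof cases
    case 1
    have "ln x \<le> 0" using assms by simp
    then have "x * ln x \<le> 0" using assms by (simp add: mult_nonneg_nonpos)
    then have "1 - x + x * ln x < 1" using assms by linarith
    then show ?thesis using 1 by (simp add: pd_phi_real_def)
  next
    case 2
    have "x powr (lam + 1) \<le> x powr 1" using assms 2 by (intro powr_mono') auto
    then have "x powr (lam + 1) \<le> x" using assms by simp
    moreover have "lam * x > 0" using assms 2 by simp
    moreover have "lam * (1 - x) = lam - lam * x" by (simp add: algebra_simps)
    ultimately have "x powr (lam+1) - x + lam * (1 - x) < lam" using assms by linarith
    then have "(x powr (lam+1) - x + lam * (1 - x)) / (lam * (lam+1)) < lam / (lam * (lam+1))"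
      using 2 by (intro divide_strict_right_mono) auto
    moreover have "lam / (lam * (lam+1)) = 1 / (lam + 1)" using 2 by simp
    moreover have "pd_phi_real lam x = (x powr (lam+1) - x + lam * (1 - x)) / (lam * (lam+1))"
      using 2 by (simp add: pd_phi_real_def)
    ultimately show ?thesis by (simp only:)
  next
    case 3
    have "x powr (lam + 1) \<ge> x powr 1" using assms 3 by (intro powr_mono') auto
    then have "x powr (lam + 1) \<ge> x" using assms by simp
    moreover have "lam * x < 0" using assms 3 by (simp add: mult_neg_pos)
    moreover have "lam * (1 - x) = lam - lam * x" by (simp add: algebra_simps)
    ultimately have "x powr (lam+1) - x + lam * (1 - x) > lam" by linarith
    moreover have "lam * (lam+1) < 0" using 3 assms by (simp add: mult_neg_pos)
    ultimately have "(x powr (lam+1) - x + lam * (1 - x)) / (lam * (lam+1)) < lam / (lam * (lam+1))"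
      by (intro divide_strict_right_mono_neg) 
    moreover have "lam / (lam * (lam+1)) = 1 / (lam + 1)" using 3 by simp
    moreover have "pd_phi_real lam x = (x powr (lam+1) - x + lam * (1 - x)) / (lam * (lam+1))"
      using 3 assms by (simp add: pd_phi_real_def)
    ultimately show ?thesis by (simp only:)
  qed
qed

lemma phi_lim0:
  assumes "lam > -1"
  shows "(pd_phi_real lam \<longlongrightarrow> 1 / (lam + 1)) (at_right 0)"
proof (cases "lam = 0")
  case True
  have "((\<lambda>x::real. 1 - x + x * ln x) \<longlongrightarrow> 1) (at_right 0)" by real_asymp
  then show ?thesis using True by (simp add: pd_phi_real_def[abs_def])
next
  case False
  have "((\<lambda>x::real. x powr (lam + 1)) \<longlongrightarrow> 0) (at_right 0)"
    using assms by (intro tendsto_zero_powrI tendsto_ident_at tendsto_const)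
       (auto simp: eventually_at_right_less eventually_at_filter)
  then have "((\<lambda>x::real. (x powr (lam + 1) - x + lam * (1 - x)) / (lam * (lam + 1))) \<longlongrightarrow> 
     (0 - 0 + lam * (1 - 0)) / (lam * (lam + 1))) (at_right 0)"
    using False assms by (intro tendsto_intros) (auto intro: tendsto_ident_at)
  then show ?thesis using False assms by (simp add: pd_phi_real_def[abs_def])
qed



lemma phi_inj:
  assumes "0 < x" "x \<le> 1" "0 < y" "y \<le> 1" "pd_phi_real lam x = pd_phi_real lam y"
  shows "x = y"
proof (rule ccontr)
  assume "x \<noteq> y"
  then consider "x < y" | "y < x" by linarith
  then show False
    using phi_strict_dec[of x y lam] phi_strict_dec[of y x lam] assms by cases auto
qed

lemma phi_big:
  assumes "ereal t < pd_phi lam 0"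
  shows "\<exists>a. 0 < a \<and> a \<le> 1 \<and> t < pd_phi_real lam a"
proof -
  consider "lam > -1" | "lam = -1" | "lam < -1" by linarith
  then show ?thesis
  proof cases
    case 1
    then have "t < 1 / (lam + 1)" using assms by (simp add: pd_phi_zero_gt)
    then have "eventually (\<lambda>x. t < pd_phi_real lam x) (at_right 0)"
      using order_tendstoD(1)[OF phi_lim0[OF 1]] by blast
    moreover have "eventually (\<lambda>x. x \<in> {0<..<1}) (at_right (0::real))"
      by (rule eventually_at_right_real) simp
    ultimately have "eventually (\<lambda>x. t < pd_phi_real lam x \<and> x \<in> {0<..<1}) (at_right (0::real))"
      by (rule eventually_conj)
    then obtain x where "t < pd_phi_real lam x \<and> x \<in> {0<..<1}"
      using eventually_happens'[OF trivial_limit_at_right_real] by blast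
    then show ?thesis by (intro exI[of _ x]) auto
  next
    case 2
    define a where "a = exp (-(\<bar>t\<bar> + 2))"
    have a0: "0 < a" "a \<le> 1" by (auto simp: a_def)
    have "pd_phi_real lam a = a - 1 + (\<bar>t\<bar> + 2)" using 2 by (simp add: pd_phi_real_def a_def)
    then have "t < pd_phi_real lam a" using a0 by linarith
    then show ?thesis using a0 by blast
  next
    case 3
    define A where "A = lam + 1"
    define k where "k = lam * A"
    have A0: "A < 0" and k0: "k > 0" using 3 by (auto simp: A_def k_def mult_neg_neg)
    define B where "B = k * \<bar>t\<bar> + \<bar>lam\<bar> + 1"
    have "k * \<bar>t\<bar> \<ge> 0" using k0 by simp
    then have B1: "B > 1" using 3 by (simp add: B_def)
    define a where "a = B powr (1 / A)"
    have a0: "0 < a" using B1 by (simp add: a_def)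
    have "a < 1" unfolding a_def using B1 A0
      by (simp add: powr_less_one divide_neg_pos)  
    have aA: "a powr A = B" using B1 A0 by (simp add: a_def powr_powr)
    have "pd_phi_real lam a = (a powr A - a + lam * (1 - a)) / k"
      using 3 by (simp add: pd_phi_real_def A_def k_def)
    also have "a powr A - a + lam * (1 - a) = B + lam - A * a" unfolding aA by (simp add: A_def algebra_simps)
    finally have eq: "pd_phi_real lam a = (B + lam - A * a) / k" .
    have "A * a < 0" using A0 a0 by (simp add: mult_neg_pos)
    then have "k * \<bar>t\<bar> + 1 < B + lam - A * a" unfolding B_def by linarith
    then have "(k * \<bar>t\<bar> + 1) / k < (B + lam - A * a) / k" using k0 by (simp add: divide_strict_right_mono)
    moreover have "(k * \<bar>t\<bar> + 1) / k = \<bar>t\<bar> + 1 / k" using k0 by (simp add: field_simps)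
    moreover have "1 / k > 0" using k0 by simp
    ultimately have "t < pd_phi_real lam a" using eq by linarith
    then show ?thesis using a0 \<open>a < 1\<close> by (intro exI[of _ a]) auto
  qed
qed

lemma pinv_eq:
  assumes "0 \<le> t" "ereal t < pd_phi lam 0" "0 < x" "x \<le> 1" "pd_phi_real lam x = t"
  shows "pd_phi_pinv lam (ereal t) = x"
proof -
  have "(THE x. x \<in> {0..1} \<and> pd_phi lam x = ereal t) = x"
  proof (rule the_equality)
    show "x \<in> {0..1} \<and> pd_phi lam x = ereal t" using assms by auto
  next
    fix y assume y: "y \<in> {0..1} \<and> pd_phi lam y = ereal t"
    have "y \<noteq> 0" using y assms(2) by auto
    then have "0 < y" using y by auto
    then have "pd_phi_real lam y = t" using y by simp
    then show "y = x" using phi_inj[of y x lam] assms y \<open>0 < y\<close> by auto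
  qed
  then show ?thesis using assms by (simp add: pd_phi_pinv_def)
qed

lemma pinv_char:
  assumes "0 \<le> t" "ereal t < pd_phi lam 0"
  shows "\<exists>x. 0 < x \<and> x \<le> 1 \<and> pd_phi_real lam x = t \<and> pd_phi_pinv lam (ereal t) = x"
proof -
  obtain a where a: "0 < a" "a \<le> 1" "t < pd_phi_real lam a" using phi_big[OF assms(2)] by blast
  have "\<exists>x. a \<le> x \<and> x \<le> 1 \<and> pd_phi_real lam x = t"
    by (rule IVT2') (use a assms phi_contOn[OF a(1)] in auto)
  then obtain x where x: "a \<le> x" "x \<le> 1" "pd_phi_real lam x = t" by blast
  then show ?thesis using pinv_eq[OF assms, of x] a by (intro exI[of _ x]) auto
qed

lemma copula_diag:
  assumes "0 < u" "u \<le> 1"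
  shows "pd_copula lam u u = pd_phi_pinv lam (ereal (2 * pd_phi_real lam u))"
  using assms by (simp add: pd_copula_def)

lemma pd_phi_one [simp]: "pd_phi lam 1 = 0"
  by (simp add: pd_phi_def zero_ereal_def)

lemma copula_one:
  assumes "0 \<le> u" "u \<le> 1"
  shows "pd_copula lam 1 u = u" "pd_copula lam u 1 = u"
proof -
  have "pd_phi_pinv lam (pd_phi lam u) = u"
  proof (cases "u = 0")
    case True then show ?thesis by (simp add: pd_phi_pinv_def)
  next
    case False
    then have u0: "0 < u" using assms by simp
    have "ereal (pd_phi_real lam u) < pd_phi lam 0"
    proof (cases "lam \<le> -1")
      case True then show ?thesis by (simp add: pd_phi_zero_le)
    next
      case False then show ?thesis using phi_lt_phi0[of lam u] u0 assms by (simp add: pd_phi_zero_gt)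
    qed
    then show ?thesis using pinv_eq[of "pd_phi_real lam u" lam u] u0 assms phi_nonneg[of u lam] by simp
  qed
  then show "pd_copula lam 1 u = u" "pd_copula lam u 1 = u" by (simp_all add: pd_copula_def)
qed



lemma diag_val:
  assumes "0 < u" "u \<le> 1" "ereal (2 * pd_phi_real lam u) < pd_phi lam 0"
  shows "0 < pd_copula lam u u \<and> pd_copula lam u u \<le> 1 \<and>
         pd_phi_real lam (pd_copula lam u u) = 2 * pd_phi_real lam u"
proof -
  have "0 \<le> 2 * pd_phi_real lam u" using phi_nonneg[of u lam] assms by simp
  from pinv_char[OF this assms(3)] obtain x where
    "0 < x" "x \<le> 1" "pd_phi_real lam x = 2 * pd_phi_real lam u"
    "pd_phi_pinv lam (ereal (2 * pd_phi_real lam u)) = x" by blast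
  then show ?thesis using copula_diag[OF assms(1,2), of lam] by simp
qed

lemma lower_lim:
  "((\<lambda>u. pd_copula lam u u / u) \<longlongrightarrow> (if lam < -1 then 2 powr (1 / (lam + 1)) else 0)) (at_right 0)"
proof -
  have ev01: "eventually (\<lambda>u. u \<in> {0<..<1}) (at_right (0::real))"
    by (rule eventually_at_right_real) simp
  consider "lam > -1" | "lam = -1" | "lam < -1" by linarith
  then show ?thesis
  proof cases
    case 1
    define c where "c = 1 / (lam + 1)"
    have c0: "0 < c" using 1 by (simp add: c_def)
    have "c / 2 < c" using c0 by simp
    then have "eventually (\<lambda>u. c / 2 < pd_phi_real lam u) (at_right 0)"
      using order_tendstoD(1)[OF phi_lim0[OF 1]] by (simp add: c_def)
    then have ev0: "eventually (\<lambda>u. pd_copula lam u u / u = 0) (at_right 0)"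
      using ev01
    proof eventually_elim
      case (elim u)
      then have "c \<le> 2 * pd_phi_real lam u" by linarith
      then have "\<not> ereal (2 * pd_phi_real lam u) < pd_phi lam 0"
        using 1 by (simp add: pd_phi_zero_gt c_def[symmetric])
      then show ?case using copula_diag[of u lam] elim by (simp add: pd_phi_pinv_def)
    qed
    have "((\<lambda>u. pd_copula lam u u / u) \<longlongrightarrow> 0) (at_right 0)"
      by (subst tendsto_cong[OF ev0]) simp
    then show ?thesis using 1 by simp
  next
    case 2
    have ev: "eventually (\<lambda>u. 0 \<le> pd_copula lam u u / u \<and> pd_copula lam u u / u \<le> exp 2 * u) (at_right 0)"
      using ev01
    proof eventually_elim
      case (elim u)
      then have u: "0 < u" "u < 1" by auto
      define v where "v = pd_copula lam u u"
      have "ereal (2 * pd_phi_real lam u) < pd_phi lam 0" using 2 by (simp add: pd_phi_zero_le)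
      from diag_val[OF u(1) _ this] u have v: "0 < v" "v \<le> 1" "pd_phi_real lam v = 2 * pd_phi_real lam u"
        by (auto simp: v_def)
      then have "v - 1 - ln v = 2 * (u - 1 - ln u)" using 2 by (simp add: pd_phi_real_def)
      then have "ln v = v + 1 - 2 * u + 2 * ln u" by (simp add: algebra_simps)
      then have "ln v \<le> 2 + 2 * ln u" using v u by linarith
      also have "2 + 2 * ln u = ln (exp 2 * u^2)" using u by (simp add: ln_mult ln_realpow)
      finally have lnle: "ln v \<le> ln (exp 2 * u^2)" .
      have pos: "0 < exp 2 * u^2" using u by simp
      have "v \<le> exp 2 * u^2" using lnle ln_le_cancel_iff[OF v(1) pos] by blast
      then have "v / u \<le> exp 2 * u^2 / u" using u by (intro divide_right_mono) auto
      also have "exp 2 * u^2 / u = exp 2 * u" using u by (simp add: power2_eq_square)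
      finally have "v / u \<le> exp 2 * u" .
      moreover have "0 \<le> v / u" using u v by simp
      ultimately show ?case unfolding v_def by blast
    qed
    have "((\<lambda>u. exp 2 * u) \<longlongrightarrow> exp 2 * 0) (at_right (0::real))"
      by (intro tendsto_intros tendsto_ident_at)
    then have h: "((\<lambda>u. exp 2 * u) \<longlongrightarrow> 0) (at_right (0::real))" by simp
    have e1: "eventually (\<lambda>u. 0 \<le> pd_copula lam u u / u) (at_right 0)"
      using ev by (rule eventually_mono) blast
    have e2: "eventually (\<lambda>u. pd_copula lam u u / u \<le> exp 2 * u) (at_right 0)"
      using ev by (rule eventually_mono) blast
    have "((\<lambda>u. pd_copula lam u u / u) \<longlongrightarrow> 0) (at_right 0)"
      by (rule tendsto_sandwich[OF e1 e2 tendsto_const h])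
    then show ?thesis using 2 by simp
  next
    case 3
    define A where "A = lam + 1"
    define k where "k = lam * A"
    have A0: "A < 0" and k0: "k > 0" using 3 by (auto simp: A_def k_def mult_neg_neg)
    define g where "g = (\<lambda>u. (lam + A * pd_copula lam u u - 2 * A * u) * u powr (-A))"
    have phiform: "pd_phi_real lam x = (x powr A + lam - A * x) / k" for x
    proof -
      have "x powr (lam+1) - x + lam * (1 - x) = x powr A + lam - A * x" by (simp add: A_def algebra_simps)
      moreover have "pd_phi_real lam x = (x powr (lam+1) - x + lam * (1 - x)) / (lam * (lam + 1))"
        using 3 by (simp add: pd_phi_real_def)
      ultimately show ?thesis by (simp add: k_def A_def)
    qed
    have vbound: "0 < pd_copula lam u u \<and> pd_copula lam u u \<le> 1 \<and>
        pd_copula lam u u powr A = 2 * u powr A + (lam + A * pd_copula lam u u - 2 * A * u)"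
      if u: "0 < u" "u < 1" for u
    proof -
      define v where "v = pd_copula lam u u"
      have "ereal (2 * pd_phi_real lam u) < pd_phi lam 0" using 3 by (simp add: pd_phi_zero_le)
      from diag_val[OF u(1) _ this] u have v: "0 < v" "v \<le> 1" "pd_phi_real lam v = 2 * pd_phi_real lam u"
        by (auto simp: v_def)
      have e: "(v powr A + lam - A * v) / k = 2 * ((u powr A + lam - A * u) / k)"
        using v(3) by (simp only: phiform)
      have "v powr A + lam - A * v = k * ((v powr A + lam - A * v) / k)" using k0 by simp
      also have "\<dots> = k * (2 * ((u powr A + lam - A * u) / k))" by (simp only: e)
      also have "\<dots> = 2 * (u powr A + lam - A * u)" using k0 by simp
      finally have "v powr A + lam - A * v = 2 * (u powr A + lam - A * u)" .
      then have "v powr A = 2 * u powr A + (lam + A * v - 2 * A * u)" by (simp add: algebra_simps)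
      then show ?thesis using v by (simp add: v_def)
    qed
    have eq: "eventually (\<lambda>u. pd_copula lam u u / u = (2 + g u) powr (1 / A)) (at_right 0)"
      using ev01
    proof eventually_elim
      case (elim u)
      then have u: "0 < u" "u < 1" by auto
      define v where "v = pd_copula lam u u"
      define W where "W = lam + A * v - 2 * A * u"
      have v: "0 < v" "v \<le> 1" and vA: "v powr A = 2 * u powr A + W"
        using vbound[OF u] by (auto simp: v_def W_def)
      have upos: "u powr A > 0" using u by simp
      have "(v / u) powr A = v powr A / u powr A" using u v by (simp add: powr_divide)
      also have "\<dots> = 2 + W / u powr A" using upos by (simp add: vA add_divide_distrib)
      also have "W / u powr A = g u"
        using u by (simp add: g_def v_def W_def powr_minus divide_inverse)
      finally have "(v / u) powr A = 2 + g u" .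
      moreover have "((v / u) powr A) powr (1 / A) = v / u" using u v A0 by (simp add: powr_powr)
      ultimately show ?case by (simp add: v_def)
    qed
    have g0: "(g \<longlongrightarrow> 0) (at_right 0)"
    proof (rule Lim_null_comparison)
      have "((\<lambda>u::real. u powr (-A)) \<longlongrightarrow> 0) (at_right 0)"
        using A0 by (intro tendsto_zero_powrI tendsto_ident_at tendsto_const)
          (auto simp: eventually_at_right_less eventually_at_filter)
      from tendsto_mult[OF tendsto_const this, of "\<bar>lam\<bar> + 3 * \<bar>A\<bar>"]
      show "((\<lambda>u. (\<bar>lam\<bar> + 3 * \<bar>A\<bar>) * u powr (-A)) \<longlongrightarrow> 0) (at_right 0)"
        by simp
      show "eventually (\<lambda>u. norm (g u) \<le> (\<bar>lam\<bar> + 3 * \<bar>A\<bar>) * u powr (-A)) (at_right 0)"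
        using ev01
      proof eventually_elim
        case (elim u)
        then have u: "0 < u" "u < 1" by auto
        define v where "v = pd_copula lam u u"
        have v: "0 < v" "v \<le> 1" using vbound[OF u] by (auto simp: v_def)
        have "\<bar>A * v\<bar> \<le> \<bar>A\<bar>" using v by (simp add: abs_mult mult_left_le)
        moreover have "\<bar>2 * A * u\<bar> \<le> 2 * \<bar>A\<bar>" using u by (simp add: abs_mult mult_left_le)
        ultimately have b: "\<bar>lam + A * v - 2 * A * u\<bar> \<le> \<bar>lam\<bar> + 3 * \<bar>A\<bar>" by linarith
        have p: "u powr (-A) \<ge> 0" by simp
        have "norm (g u) = \<bar>lam + A * v - 2 * A * u\<bar> * u powr (-A)"
          by (simp add: g_def v_def abs_mult)
        also have "\<dots> \<le> (\<bar>lam\<bar> + 3 * \<bar>A\<bar>) * u powr (-A)" by (rule mult_right_mono[OF b p])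
        finally show ?case .
      qed
    qed
    have "((\<lambda>u. (2 + g u) powr (1 / A)) \<longlongrightarrow> (2 + 0) powr (1 / A)) (at_right 0)"
      by (intro tendsto_powr tendsto_add tendsto_const g0) simp
    then have "((\<lambda>u. pd_copula lam u u / u) \<longlongrightarrow> 2 powr (1 / A)) (at_right 0)"
      using tendsto_cong[OF eq] by simp
    then show ?thesis using 3 by (simp add: A_def)
  qed
qed



lemma phi_lim1: "(pd_phi_real lam \<longlongrightarrow> 0) (at_left 1)"
proof -
  have "isCont (pd_phi_real lam) 1" by (rule phi_isCont) simp
  then have "(pd_phi_real lam \<longlongrightarrow> pd_phi_real lam 1) (at 1)" unfolding isCont_def .
  then have "(pd_phi_real lam \<longlongrightarrow> 0) (at 1 within UNIV)" by simp
  from tendsto_mono[OF at_le[OF subset_UNIV] this] show ?thesis .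
qed

lemma upper_lim:
  "((\<lambda>u. (1 - 2 * u + pd_copula lam u u) / (1 - u)) \<longlongrightarrow> 2 - sqrt 2) (at_left 1)"
proof -
  have ev01: "eventually (\<lambda>u. u \<in> {0<..<1}) (at_left (1::real))"
    by (rule eventually_at_left_real) simp
  have small: "eventually (\<lambda>u. 2 * pd_phi_real lam u < c) (at_left 1)" if "c > 0" for c
  proof -
    have "c / 2 > 0" using that by simp
    from order_tendstoD(2)[OF phi_lim1[of lam] this] show ?thesis
      by (rule eventually_mono) linarith
  qed
  have evin: "eventually (\<lambda>u. ereal (2 * pd_phi_real lam u) < pd_phi lam 0) (at_left 1)"
  proof (cases "lam \<le> -1")
    case True then show ?thesis by (simp add: pd_phi_zero_le)
  next
    case False
    then have "1 / (lam + 1) > 0" by simp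
    have pz: "pd_phi lam 0 = ereal (1 / (lam + 1))" using False by (simp add: pd_phi_zero_gt)
    from small[OF \<open>1 / (lam + 1) > 0\<close>] show ?thesis
      by (rule eventually_mono) (simp add: pz)
  qed
  define v where "v = (\<lambda>u. pd_copula lam u u)"
  have vprop: "eventually (\<lambda>u. 0 < u \<and> u < 1 \<and> 0 < v u \<and> v u < 1 \<and>
       pd_phi_real lam (v u) = 2 * pd_phi_real lam u) (at_left 1)"
    using ev01 evin
  proof eventually_elim
    case (elim u)
    then have u: "0 < u" "u < 1" by auto
    from diag_val[OF u(1) _ elim(2)] u have vv: "0 < v u" "v u \<le> 1" "pd_phi_real lam (v u) = 2 * pd_phi_real lam u"
      by (auto simp: v_def)
    have "v u \<noteq> 1" using vv(3) phi_pos[OF u, of lam] by auto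
    then show ?case using vv u by auto
  qed
  have vlim: "(v \<longlongrightarrow> 1) (at_left 1)"
  proof (rule order_tendstoI)
    fix a :: real assume "a < 1"
    show "eventually (\<lambda>u. a < v u) (at_left 1)"
    proof (cases "a \<le> 0")
      case True show ?thesis using vprop by (rule eventually_mono) (use True in auto)
    next
      case False
      then have a: "0 < a" "a < 1" using \<open>a < 1\<close> by auto
      have "pd_phi_real lam a > 0" using phi_pos[OF a] by simp
      from small[OF this] vprop show ?thesis
      proof eventually_elim
        case (elim u)
        show ?case
        proof (rule ccontr)
          assume "\<not> a < v u"
          then have "pd_phi_real lam a \<le> pd_phi_real lam (v u)" using phi_dec[of "v u" a lam] elim a by auto
          then show False using elim by auto
        qed
      qed
    qed
  next
    fix a :: real assume "a > 1"
    show "eventually (\<lambda>u. v u < a) (at_left 1)" using vprop by (rule eventually_mono) (use \<open>a > 1\<close> in auto)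
  qed
  have "\<forall>x. \<exists>t. 0 < x \<and> x < 1 \<longrightarrow> x < t \<and> t < 1 \<and> pd_phi_real lam x = t powr (lam - 1) * (1 - x)^2 / 2"
  proof
    fix x
    show "\<exists>t. 0 < x \<and> x < 1 \<longrightarrow> x < t \<and> t < 1 \<and> pd_phi_real lam x = t powr (lam - 1) * (1 - x)^2 / 2"
    proof (cases "0 < x \<and> x < 1")
      case True
      then obtain t where "x < t \<and> t < 1 \<and> pd_phi_real lam x = t powr (lam - 1) * (1 - x)^2 / 2"
        using phi_taylor[of x lam] by auto
      then show ?thesis by auto
    qed auto
  qed
  then have "\<exists>Xi. \<forall>x. 0 < x \<and> x < 1 \<longrightarrow> x < Xi x \<and> Xi x < 1 \<and> pd_phi_real lam x = Xi x powr (lam - 1) * (1 - x)^2 / 2"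
    by (rule choice)
  then obtain Xi where XiA: "\<forall>x. 0 < x \<and> x < 1 \<longrightarrow> x < Xi x \<and> Xi x < 1 \<and> pd_phi_real lam x = Xi x powr (lam - 1) * (1 - x)^2 / 2"
    by (elim exE)
  have Xi: "x < Xi x \<and> Xi x < 1 \<and> pd_phi_real lam x = Xi x powr (lam - 1) * (1 - x)^2 / 2"
    if "0 < x" "x < 1" for x
    using XiA that by simp
  have Xi1: "((\<lambda>u. Xi (f u)) \<longlongrightarrow> 1) (at_left 1)"
    if f: "(f \<longlongrightarrow> 1) (at_left 1)" "eventually (\<lambda>u. 0 < f u \<and> f u < 1) (at_left 1)" for f :: "real \<Rightarrow> real"
  proof (rule tendsto_sandwich[OF _ _ f(1) tendsto_const])
    show "eventually (\<lambda>u. f u \<le> Xi (f u)) (at_left 1)" using f(2)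
      by (rule eventually_mono) (use Xi less_imp_le in blast)
    show "eventually (\<lambda>u. Xi (f u) \<le> 1) (at_left 1)" using f(2)
      by (rule eventually_mono) (use Xi less_imp_le in blast)
  qed
  have XiU: "((\<lambda>u. Xi u) \<longlongrightarrow> 1) (at_left 1)"
  proof (rule Xi1[of "\<lambda>u. u"])
    show "((\<lambda>u. u) \<longlongrightarrow> 1) (at_left (1::real))" by (rule tendsto_ident_at)
    show "eventually (\<lambda>u. 0 < u \<and> u < 1) (at_left (1::real))" using ev01 by (rule eventually_mono) auto
  qed
  have XiV: "((\<lambda>u. Xi (v u)) \<longlongrightarrow> 1) (at_left 1)"
  proof (rule Xi1[OF vlim])
    show "eventually (\<lambda>u. 0 < v u \<and> v u < 1) (at_left (1::real))" using vprop by (rule eventually_mono) auto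
  qed
  define b where "b = lam - 1"
  have eqr: "eventually (\<lambda>u. (1 - 2 * u + pd_copula lam u u) / (1 - u) =
      2 - sqrt (2 * Xi u powr b / Xi (v u) powr b)) (at_left 1)"
    using vprop
  proof eventually_elim
    case (elim u)
    then have u: "0 < u" "u < 1" and vv: "0 < v u" "v u < 1" and ph: "pd_phi_real lam (v u) = 2 * pd_phi_real lam u"
      by auto
    define xu where "xu = Xi u"
    define xv where "xv = Xi (v u)"
    have xu: "u < xu" "xu < 1" "pd_phi_real lam u = xu powr b * (1 - u)^2 / 2"
      using Xi[OF u] by (auto simp: b_def xu_def)
    have xv: "v u < xv" "xv < 1" "pd_phi_real lam (v u) = xv powr b * (1 - v u)^2 / 2"
      using Xi[OF vv] by (auto simp: b_def xv_def)
    have pu: "xu powr b > 0" "xv powr b > 0" using xu xv u vv by auto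
    define P where "P = xu powr b"
    define Q where "Q = xv powr b"
    have PQ: "P > 0" "Q > 0" using pu by (auto simp: P_def Q_def)
    have "Q * (1 - v u)^2 / 2 = 2 * (P * (1 - u)^2 / 2)" using ph xu(3) xv(3) by (simp add: P_def Q_def)
    then have e1: "Q * (1 - v u)^2 = 2 * P * (1 - u)^2" by simp
    have "((1 - v u) / (1 - u))^2 = (1 - v u)^2 / (1 - u)^2" by (simp add: power_divide)
    also have "(1 - v u)^2 = 2 * P * (1 - u)^2 / Q" using e1 PQ by (simp add: eq_divide_eq mult.commute)
    also have "2 * P * (1 - u)^2 / Q / (1 - u)^2 = 2 * P / Q" using u by simp
    finally have sq: "((1 - v u) / (1 - u))^2 = 2 * P / Q" .
    moreover have "(1 - v u) / (1 - u) > 0" using u vv by simp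
    ultimately have r: "(1 - v u) / (1 - u) = sqrt (2 * xu powr b / xv powr b)"
      unfolding P_def[symmetric] Q_def[symmetric] by (metis less_eq_real_def real_sqrt_unique)
    have "(1 - 2 * u + v u) / (1 - u) = 2 - (1 - v u) / (1 - u)"
      using u by (simp add: field_simps)
    then show ?case using r by (simp add: v_def xu_def xv_def)
  qed
  have "((\<lambda>u. 2 - sqrt (2 * Xi u powr b / Xi (v u) powr b)) \<longlongrightarrow> 2 - sqrt (2 * 1 powr b / 1 powr b)) (at_left 1)"
    by (intro tendsto_diff tendsto_const tendsto_real_sqrt tendsto_divide tendsto_mult tendsto_powr XiU XiV) auto
  then have "((\<lambda>u. 2 - sqrt (2 * Xi u powr b / Xi (v u) powr b)) \<longlongrightarrow> 2 - sqrt 2) (at_left 1)"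
    by simp
  then show ?thesis using tendsto_cong[OF eqr] by simp
qed



theorem theorem4:
  fixes M :: "'a measure" and U1 U2 :: "'a \<Rightarrow> real" and lam :: real
  assumes "prob_space M"
    and "U1 \<in> borel_measurable M" and "U2 \<in> borel_measurable M"
    and "\<And>x y. x \<in> {0..1} \<Longrightarrow> y \<in> {0..1} \<Longrightarrow>
           measure M {\<omega> \<in> space M. U1 \<omega> \<le> x \<and> U2 \<omega> \<le> y} = pd_copula lam x y"
  shows "((\<lambda>u. measure M {\<omega> \<in> space M. U1 \<omega> \<le> u \<and> U2 \<omega> \<le> u}
                / measure M {\<omega> \<in> space M. U2 \<omega> \<le> u})
            \<longlongrightarrow> (if lam < -1 then 2 powr (1 / (lam + 1)) else 0)) (at_right 0) \<and>
         ((\<lambda>u. measure M {\<omega> \<in> space M. U1 \<omega> \<ge> u \<and> U2 \<omega> \<ge> u}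
                / measure M {\<omega> \<in> space M. U2 \<omega> \<ge> u})
            \<longlongrightarrow> 2 - sqrt 2) (at_left 1)"
proof -
  interpret prob_space M by (rule assms(1))
  note [measurable] = assms(2) assms(3)
  define J where "J = (\<lambda>x y. {\<omega> \<in> space M. U1 \<omega> \<le> x \<and> U2 \<omega> \<le> y})"
  define L1 where "L1 = (\<lambda>x. {\<omega> \<in> space M. U1 \<omega> \<le> x})"
  define L2 where "L2 = (\<lambda>x. {\<omega> \<in> space M. U2 \<omega> \<le> x})"
  define E1 where "E1 = (\<lambda>x. {\<omega> \<in> space M. U1 \<omega> = x})"
  define E2 where "E2 = (\<lambda>x. {\<omega> \<in> space M. U2 \<omega> = x})"
  define K1 where "K1 = (\<lambda>x. {\<omega> \<in> space M. U1 \<omega> < x})"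
  define K2 where "K2 = (\<lambda>x. {\<omega> \<in> space M. U2 \<omega> < x})"
  define KK where "KK = (\<lambda>x. {\<omega> \<in> space M. U1 \<omega> < x \<and> U2 \<omega> < x})"
  have sJ[measurable]: "J x y \<in> sets M" for x y unfolding J_def by measurable
  have sL1[measurable]: "L1 x \<in> sets M" for x unfolding L1_def by measurable
  have sL2[measurable]: "L2 x \<in> sets M" for x unfolding L2_def by measurable
  have sE1[measurable]: "E1 x \<in> sets M" for x unfolding E1_def by measurable
  have sE2[measurable]: "E2 x \<in> sets M" for x unfolding E2_def by measurable
  have sK1[measurable]: "K1 x \<in> sets M" for x unfolding K1_def by measurable
  have sK2[measurable]: "K2 x \<in> sets M" for x unfolding K2_def by measurable
  have sKK[measurable]: "KK x \<in> sets M" for x unfolding KK_def by measurable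
  have subadd: "prob (A \<union> B) \<le> prob A + prob B" if "A \<in> sets M" "B \<in> sets M" for A B
  proof -
    have "prob (A \<union> B) = prob A + prob (B - A)" using that by (rule finite_measure_Union')
    moreover have "prob (B - A) \<le> prob B" using that by (intro finite_measure_mono) auto
    ultimately show ?thesis by linarith
  qed
  have F: "prob (J x y) = pd_copula lam x y"
    if "0 \<le> x" "x \<le> 1" "0 \<le> y" "y \<le> 1" for x y
    using assms(4)[of x y] that by (simp add: J_def)
  have J11: "prob (J 1 1) = 1" using F[of 1 1] copula_one(1)[of 1 lam] by simp
  have L11: "prob (L1 1) = 1"
  proof -
    have "J 1 1 \<subseteq> L1 1" by (auto simp: J_def L1_def)
    then have "prob (J 1 1) \<le> prob (L1 1)" by (intro finite_measure_mono) auto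
    then show ?thesis using J11 prob_le_1[of "L1 1"] by linarith
  qed
  have L21: "prob (L2 1) = 1"
  proof -
    have "J 1 1 \<subseteq> L2 1" by (auto simp: J_def L2_def)
    then have "prob (J 1 1) \<le> prob (L2 1)" by (intro finite_measure_mono) auto
    then show ?thesis using J11 prob_le_1[of "L2 1"] by linarith
  qed
  have L2y: "prob (L2 y) = y" if y: "0 \<le> y" "y \<le> 1" for y
  proof -
    have Fy: "prob (J 1 y) = y" using F[of 1 y] copula_one(1)[OF y, of lam] y by simp
    have "J 1 y \<subseteq> L2 y" by (auto simp: J_def L2_def)
    then have lo: "prob (J 1 y) \<le> prob (L2 y)" by (intro finite_measure_mono) auto
    have "L2 y \<subseteq> J 1 y \<union> (space M - L1 1)" by (auto simp: J_def L1_def L2_def)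
    then have "prob (L2 y) \<le> prob (J 1 y \<union> (space M - L1 1))" by (intro finite_measure_mono) auto
    also have "\<dots> \<le> prob (J 1 y) + prob (space M - L1 1)" by (intro subadd) auto
    also have "prob (space M - L1 1) = 0" using prob_compl[OF sL1[of 1]] L11 by simp
    finally show ?thesis using lo Fy by linarith
  qed
  have L1y: "prob (L1 y) = y" if y: "0 \<le> y" "y \<le> 1" for y
  proof -
    have Fy: "prob (J y 1) = y" using F[of y 1] copula_one(2)[OF y, of lam] y by simp
    have "J y 1 \<subseteq> L1 y" by (auto simp: J_def L1_def)
    then have lo: "prob (J y 1) \<le> prob (L1 y)" by (intro finite_measure_mono) auto
    have "L1 y \<subseteq> J y 1 \<union> (space M - L2 1)" by (auto simp: J_def L1_def L2_def)
    then have "prob (L1 y) \<le> prob (J y 1 \<union> (space M - L2 1))" by (intro finite_measure_mono) auto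
    also have "\<dots> \<le> prob (J y 1) + prob (space M - L2 1)" by (intro subadd) auto
    also have "prob (space M - L2 1) = 0" using prob_compl[OF sL2[of 1]] L21 by simp
    finally show ?thesis using lo Fy by linarith
  qed
  have atom: "prob {\<omega> \<in> space M. U \<omega> = u} = 0"
    if u: "0 < u" "u \<le> 1" and LU: "\<And>y. 0 \<le> y \<Longrightarrow> y \<le> 1 \<Longrightarrow> prob {\<omega> \<in> space M. U \<omega> \<le> y} = y"
      and mU: "U \<in> borel_measurable M" for U :: "'a \<Rightarrow> real" and u
  proof -
    have le: "prob {\<omega> \<in> space M. U \<omega> = u} \<le> d" if d: "0 < d" "d < u" for d
    proof -
      have s1: "{\<omega> \<in> space M. U \<omega> \<le> u} \<in> sets M" "{\<omega> \<in> space M. U \<omega> \<le> u - d} \<in> sets M"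
        "{\<omega> \<in> space M. U \<omega> = u} \<in> sets M" using mU by measurable
      have sub: "{\<omega> \<in> space M. U \<omega> \<le> u - d} \<subseteq> {\<omega> \<in> space M. U \<omega> \<le> u}" using d by auto
      have "{\<omega> \<in> space M. U \<omega> = u} \<subseteq> {\<omega> \<in> space M. U \<omega> \<le> u} - {\<omega> \<in> space M. U \<omega> \<le> u - d}"
        using d by auto
      then have "prob {\<omega> \<in> space M. U \<omega> = u} \<le> prob ({\<omega> \<in> space M. U \<omega> \<le> u} - {\<omega> \<in> space M. U \<omega> \<le> u - d})"
        using s1 by (intro finite_measure_mono) auto
      also have "\<dots> = prob {\<omega> \<in> space M. U \<omega> \<le> u} - prob {\<omega> \<in> space M. U \<omega> \<le> u - d}"
        using s1 sub by (intro finite_measure_Diff) auto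
      also have "\<dots> = u - (u - d)" using LU[of u] LU[of "u - d"] u d by simp
      finally show ?thesis by simp
    qed
    show ?thesis
    proof (rule ccontr)
      define p where "p = prob {\<omega> \<in> space M. U \<omega> = u}"
      assume "prob {\<omega> \<in> space M. U \<omega> = u} \<noteq> 0"
      then have "p > 0" using measure_nonneg[of M] unfolding p_def by (metis less_eq_real_def)
      define d where "d = min (u/2) (p/2)"
      have d: "0 < d" "d < u" "d \<le> p/2" using \<open>p > 0\<close> u by (auto simp: d_def)
      have "p \<le> d" using le[OF d(1,2)] unfolding p_def .
      then show False using d \<open>p > 0\<close> by linarith
    qed
  qed
  have E1u: "prob (E1 u) = 0" if "0 < u" "u \<le> 1" for u
    unfolding E1_def using atom[OF that, of U1] L1y by (simp add: L1_def)
  have E2u: "prob (E2 u) = 0" if "0 < u" "u \<le> 1" for u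
    unfolding E2_def using atom[OF that, of U2] L2y by (simp add: L2_def)
  have K1u: "prob (K1 u) = u" if u: "0 < u" "u \<le> 1" for u
  proof -
    have "K1 u = L1 u - E1 u" "E1 u \<subseteq> L1 u" by (auto simp: K1_def L1_def E1_def)
    then show ?thesis using finite_measure_Diff[of "L1 u" "E1 u"] L1y[of u] E1u[OF u] u by simp
  qed
  have K2u: "prob (K2 u) = u" if u: "0 < u" "u \<le> 1" for u
  proof -
    have "K2 u = L2 u - E2 u" "E2 u \<subseteq> L2 u" by (auto simp: K2_def L2_def E2_def)
    then show ?thesis using finite_measure_Diff[of "L2 u" "E2 u"] L2y[of u] E2u[OF u] u by simp
  qed
  have KKu: "prob (KK u) = pd_copula lam u u" if u: "0 < u" "u \<le> 1" for u
  proof -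
    have sub: "KK u \<subseteq> J u u" by (auto simp: KK_def J_def)
    then have up: "prob (KK u) \<le> prob (J u u)" by (intro finite_measure_mono) auto
    have "J u u - KK u \<subseteq> E1 u \<union> E2 u" by (auto simp: KK_def J_def E1_def E2_def)
    then have "prob (J u u - KK u) \<le> prob (E1 u \<union> E2 u)" by (intro finite_measure_mono) auto
    also have "\<dots> \<le> prob (E1 u) + prob (E2 u)" by (intro subadd) auto
    finally have "prob (J u u) - prob (KK u) \<le> 0"
      using finite_measure_Diff[of "J u u" "KK u"] sub E1u[OF u] E2u[OF u] by simp
    then show ?thesis using up F[of u u] u by simp
  qed
  have Gu: "prob {\<omega> \<in> space M. U1 \<omega> \<ge> u \<and> U2 \<omega> \<ge> u} = 1 - 2 * u + pd_copula lam u u"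
    if u: "0 < u" "u \<le> 1" for u
  proof -
    have "{\<omega> \<in> space M. U1 \<omega> \<ge> u \<and> U2 \<omega> \<ge> u} = space M - (K1 u \<union> K2 u)"
      by (auto simp: K1_def K2_def)
    then have "prob {\<omega> \<in> space M. U1 \<omega> \<ge> u \<and> U2 \<omega> \<ge> u} = 1 - prob (K1 u \<union> K2 u)"
      using prob_compl[of "K1 u \<union> K2 u"] by simp
    also have "prob (K1 u \<union> K2 u) = prob (K1 u) + prob (K2 u - K1 u)"
      by (rule finite_measure_Union') auto
    also have "prob (K2 u - K1 u) = prob (K2 u) - prob (K2 u \<inter> K1 u)"
      by (rule finite_measure_Diff') auto
    also have "K2 u \<inter> K1 u = KK u" by (auto simp: K1_def K2_def KK_def)
    finally show ?thesis using K1u[OF u] K2u[OF u] KKu[OF u] by simp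
  qed
  have G2u: "prob {\<omega> \<in> space M. U2 \<omega> \<ge> u} = 1 - u" if u: "0 < u" "u \<le> 1" for u
  proof -
    have "{\<omega> \<in> space M. U2 \<omega> \<ge> u} = space M - K2 u" by (auto simp: K2_def)
    then show ?thesis using prob_compl[of "K2 u"] K2u[OF u] by simp
  qed
  have lower: "((\<lambda>u. prob {\<omega> \<in> space M. U1 \<omega> \<le> u \<and> U2 \<omega> \<le> u} / prob {\<omega> \<in> space M. U2 \<omega> \<le> u})
            \<longlongrightarrow> (if lam < -1 then 2 powr (1 / (lam + 1)) else 0)) (at_right 0)"
  proof -
    have "eventually (\<lambda>u. u \<in> {0<..<1}) (at_right (0::real))"
      by (rule eventually_at_right_real) simp
    then have "eventually (\<lambda>u. prob {\<omega> \<in> space M. U1 \<omega> \<le> u \<and> U2 \<omega> \<le> u} / prob {\<omega> \<in> space M. U2 \<omega> \<le> u}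
        = pd_copula lam u u / u) (at_right 0)"
    proof (rule eventually_mono)
      fix u :: real assume "u \<in> {0<..<1}"
      then show "prob {\<omega> \<in> space M. U1 \<omega> \<le> u \<and> U2 \<omega> \<le> u} / prob {\<omega> \<in> space M. U2 \<omega> \<le> u}
        = pd_copula lam u u / u"
        using F[of u u] L2y[of u] by (simp add: J_def L2_def)
    qed
    from tendsto_cong[OF this] show ?thesis using lower_lim[of lam] by simp
  qed
  have upper: "((\<lambda>u. prob {\<omega> \<in> space M. U1 \<omega> \<ge> u \<and> U2 \<omega> \<ge> u} / prob {\<omega> \<in> space M. U2 \<omega> \<ge> u})
            \<longlongrightarrow> 2 - sqrt 2) (at_left 1)"
  proof -
    have "eventually (\<lambda>u. u \<in> {0<..<1}) (at_left (1::real))"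
      by (rule eventually_at_left_real) simp
    then have "eventually (\<lambda>u. prob {\<omega> \<in> space M. U1 \<omega> \<ge> u \<and> U2 \<omega> \<ge> u} / prob {\<omega> \<in> space M. U2 \<omega> \<ge> u}
        = (1 - 2 * u + pd_copula lam u u) / (1 - u)) (at_left 1)"
    proof (rule eventually_mono)
      fix u :: real assume "u \<in> {0<..<1}"
      then show "prob {\<omega> \<in> space M. U1 \<omega> \<ge> u \<and> U2 \<omega> \<ge> u} / prob {\<omega> \<in> space M. U2 \<omega> \<ge> u}
        = (1 - 2 * u + pd_copula lam u u) / (1 - u)"
        using Gu[of u] G2u[of u] by simp
    qed
    from tendsto_cong[OF this] show ?thesis using upper_lim[of lam] by simp
  qed
  show ?thesis using lower upper by blast
qed


end
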